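(* Let $(\mathcal{E},[\cdot,\cdot]_{\mathcal{E}})$ be a Leibniz algebra over a field $\mathbb{K}$ and $\omega:\mathcal{E}\otimes\mathcal{E}\to\mathbb{K}$ a bilinear map such that $\mathbb{K}\oplus\mathcal{E}$ with bracket $[(a,x),(b,y)]_\omega=(\omega(x,y),[x,y]_{\mathcal{E}})$ is a Leibniz algebra (a central extension of $\mathcal{E}$ by $\mathbb{K}$). Then $R^{Lei}:(\mathbb{K}\oplus\mathcal{E})^{\otimes2}\to(\mathbb{K}\oplus\mathcal{E})^{\otimes2}$, $R^{Lei}((a,x)\otimes(b,y))=(b,y)\otimes(a,x)+(1,0)\otimes(\omega(x,y),[x,y]_{\mathcal{E}})$, is a solution of the Yang-Baxter equation. Moreover, if $\omega_1,\omega_2$ are two such maps and the central extensions $(\mathbb{K}\oplus\mathcal{E},[\cdot,\cdot]_{\omega_1})$ and $(\mathbb{K}\oplus\mathcal{E},[\cdot,\cdot]_{\omega_2})$ are isomorphic via $\theta$, then the induced solutions $R^{Lei}_1,R^{Lei}_2$ satisfy $(\theta\otimes\theta)R^{Lei}_1=R^{Lei}_2(\theta\otimes\theta)$.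
   Context: A (right) Leibniz algebra is a vector space with bilinear bracket satisfying $[[x,y],z]=[[x,z],y]+[x,[y,z]]$. Isomorphism of central extensions: a Leibniz algebra homomorphism $\theta:(\mathbb{K}\oplus\mathcal{E},[\cdot,\cdot]_{\omega_1})\to(\mathbb{K}\oplus\mathcal{E},[\cdot,\cdot]_{\omega_2})$ with $\theta\circ i=i$ and $p\circ\theta=p$, where $i(a)=(a,0)$ and $p(a,x)=x$. A solution of the Yang-Baxter equation on $V$ is an invertible linear $R:V\otimes V\to V\otimes V$ with $(R\otimes\mathrm{Id})(\mathrm{Id}\otimes R)(R\otimes\mathrm{Id})=(\mathrm{Id}\otimes R)(R\otimes\mathrm{Id})(\mathrm{Id}\otimes R)$. *)

theory Defs
  imports Complex_Main "HOL-Library.Function_Algebras" "HOL-Library.Product_Plus"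
begin

definition bilinear_map ::
  "('k::field \<Rightarrow> 'a::ab_group_add \<Rightarrow> 'a) \<Rightarrow> ('k \<Rightarrow> 'b::ab_group_add \<Rightarrow> 'b)
   \<Rightarrow> ('k \<Rightarrow> 'c::ab_group_add \<Rightarrow> 'c) \<Rightarrow> ('a \<Rightarrow> 'b \<Rightarrow> 'c) \<Rightarrow> bool" where
  "bilinear_map s1 s2 s3 f \<longleftrightarrow>
     (\<forall>x. Vector_Spaces.linear s2 s3 (f x)) \<and> (\<forall>y. Vector_Spaces.linear s1 s3 (\<lambda>x. f x y))"

text \<open>A (right) Leibniz algebra: vector space with a bilinear bracket satisfying
  [[x,y],z] = [[x,z],y] + [x,[y,z]].\<close>
definition leibniz_algebra ::
  "('k::field \<Rightarrow> 'v::ab_group_add \<Rightarrow> 'v) \<Rightarrow> ('v \<Rightarrow> 'v \<Rightarrow> 'v) \<Rightarrow> bool" where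
  "leibniz_algebra sc br \<longleftrightarrow> vector_space sc \<and> bilinear_map sc sc sc br \<and>
     (\<forall>x y z. br (br x y) z = br (br x z) y + br x (br y z))"

definition leibniz_hom ::
  "('k::field \<Rightarrow> 'v::ab_group_add \<Rightarrow> 'v) \<Rightarrow> ('v \<Rightarrow> 'v \<Rightarrow> 'v)
   \<Rightarrow> ('k \<Rightarrow> 'w::ab_group_add \<Rightarrow> 'w) \<Rightarrow> ('w \<Rightarrow> 'w \<Rightarrow> 'w) \<Rightarrow> ('v \<Rightarrow> 'w) \<Rightarrow> bool" where
  "leibniz_hom s1 b1 s2 b2 f \<longleftrightarrow> Vector_Spaces.linear s1 s2 f \<and> (\<forall>x y. f (b1 x y) = b2 (f x) (f y))"

definition ce_scale :: "('k::field \<Rightarrow> 'e \<Rightarrow> 'e) \<Rightarrow> 'k \<Rightarrow> 'k \<times> 'e \<Rightarrow> 'k \<times> 'e" where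
  "ce_scale sc c v = (c * fst v, sc c (snd v))"

definition ce_bracket :: "('e \<Rightarrow> 'e \<Rightarrow> 'k) \<Rightarrow> ('e \<Rightarrow> 'e \<Rightarrow> 'e) \<Rightarrow> 'k \<times> 'e \<Rightarrow> 'k \<times> 'e \<Rightarrow> 'k \<times> 'e" where
  "ce_bracket \<omega> br u v = (\<omega> (snd u) (snd v), br (snd u) (snd v))"

text \<open>Elements of the free vector space on lists of vectors: finitely supported
  coefficient functions. A pure tensor x1 \<otimes> ... \<otimes> xn is represented by gen [x1,...,xn].\<close>
type_synonym ('v, 'k) free = "'v list \<Rightarrow> 'k"

definition fsupp :: "('v, 'k::zero) free \<Rightarrow> 'v list set" where
  "fsupp f = {l. f l \<noteq> 0}"

definition free_elt :: "nat \<Rightarrow> ('v, 'k::zero) free \<Rightarrow> bool" where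
  "free_elt n f \<longleftrightarrow> finite (fsupp f) \<and> (\<forall>l\<in>fsupp f. length l = n)"

definition gen :: "'v list \<Rightarrow> ('v, 'k::{zero,one}) free" where
  "gen xs = (\<lambda>l. if l = xs then 1 else 0)"

definition fscale :: "'k::times \<Rightarrow> ('v, 'k) free \<Rightarrow> ('v, 'k) free" where
  "fscale c f = (\<lambda>l. c * f l)"

definition tensor_rels :: "('k::field \<Rightarrow> 'v::ab_group_add \<Rightarrow> 'v) \<Rightarrow> nat \<Rightarrow> ('v, 'k) free set" where
  "tensor_rels sc n =
     {gen (p @ [x + y] @ q) - gen (p @ [x] @ q) - gen (p @ [y] @ q) | p x y q.
        length p + length q + 1 = n} \<union>
     {gen (p @ [sc c x] @ q) - fscale c (gen (p @ [x] @ q)) | p c x q.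
        length p + length q + 1 = n}"

definition tensor_null :: "('k::field \<Rightarrow> 'v::ab_group_add \<Rightarrow> 'v) \<Rightarrow> nat \<Rightarrow> ('v, 'k) free set" where
  "tensor_null sc n = module.span fscale (tensor_rels sc n)"

definition tensor_eq :: "('k::field \<Rightarrow> 'v::ab_group_add \<Rightarrow> 'v) \<Rightarrow> nat \<Rightarrow> ('v, 'k) free \<Rightarrow> ('v, 'k) free \<Rightarrow> bool" where
  "tensor_eq sc n u w \<longleftrightarrow> u - w \<in> tensor_null sc n"

definition lin_ext :: "('v list \<Rightarrow> ('v, 'k::comm_ring_1) free) \<Rightarrow> ('v, 'k) free \<Rightarrow> ('v, 'k) free" where
  "lin_ext F f = (\<lambda>m. \<Sum>l\<in>fsupp f. f l * F l m)"

text \<open>A map F given on pure tensors of degree n induces a well-defined linear endomorphism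
  of V^{\<otimes>n}: it sends degree-n generators to degree-n elements and respects the relations.\<close>
definition tensor_endo :: "('k::field \<Rightarrow> 'v::ab_group_add \<Rightarrow> 'v) \<Rightarrow> nat \<Rightarrow> ('v list \<Rightarrow> ('v, 'k) free) \<Rightarrow> bool" where
  "tensor_endo sc n F \<longleftrightarrow>
     (\<forall>l. length l = n \<longrightarrow> free_elt n (F l)) \<and>
     (\<forall>u\<in>tensor_null sc n. lin_ext F u \<in> tensor_null sc n)"

text \<open>R \<otimes> Id and Id \<otimes> R on V^{\<otimes>3}, given on pure tensors [x,y,z].\<close>
definition op12 :: "('v list \<Rightarrow> ('v, 'k::zero) free) \<Rightarrow> 'v list \<Rightarrow> ('v, 'k) free" where
  "op12 R l = (\<lambda>m. if length m = 3 \<and> m ! 2 = l ! 2 then R (take 2 l) (take 2 m) else 0)"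

definition op23 :: "('v list \<Rightarrow> ('v, 'k::zero) free) \<Rightarrow> 'v list \<Rightarrow> ('v, 'k) free" where
  "op23 R l = (\<lambda>m. if length m = 3 \<and> m ! 0 = l ! 0 then R (drop 1 l) (drop 1 m) else 0)"

definition tensor_map2 :: "('v \<Rightarrow> 'v) \<Rightarrow> 'v list \<Rightarrow> ('v, 'k::{zero,one}) free" where
  "tensor_map2 f l = gen (map f l)"

text \<open>Linear maps agree iff they agree on pure tensors, which span.\<close>
definition YBE_solution :: "('k::field \<Rightarrow> 'v::ab_group_add \<Rightarrow> 'v) \<Rightarrow> ('v list \<Rightarrow> ('v, 'k) free) \<Rightarrow> bool" where
  "YBE_solution sc R \<longleftrightarrow>
     tensor_endo sc 2 R \<and>
     (\<exists>S. tensor_endo sc 2 S \<and>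
        (\<forall>x y. tensor_eq sc 2 (lin_ext S (R [x, y])) (gen [x, y]) \<and>
               tensor_eq sc 2 (lin_ext R (S [x, y])) (gen [x, y]))) \<and>
     (\<forall>x y z. tensor_eq sc 3
        (lin_ext (op12 R) (lin_ext (op23 R) (op12 R [x, y, z])))
        (lin_ext (op23 R) (lin_ext (op12 R) (op23 R [x, y, z]))))"

definition R_Lei :: "('e \<Rightarrow> 'e \<Rightarrow> 'k::field) \<Rightarrow> ('e \<Rightarrow> 'e \<Rightarrow> 'e::ab_group_add)
    \<Rightarrow> ('k \<times> 'e) list \<Rightarrow> ('k \<times> 'e, 'k) free" where
  "R_Lei \<omega> br l =
     (if length l = 2
      then gen [l ! 1, l ! 0] + gen [(1, 0), ce_bracket \<omega> br (l ! 0) (l ! 1)]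
      else 0)"

end

theory Submission
  imports Defs
begin

lemma module_fscale: "module (fscale :: 'k::field \<Rightarrow> ('v,'k) free \<Rightarrow> ('v,'k) free)"
  by unfold_locales (auto simp: fscale_def algebra_simps)

abbreviation fin :: "('v, 'k::zero) free \<Rightarrow> bool" where
  "fin f \<equiv> finite (fsupp f)"

lemma fsupp_gen: "fsupp (gen l :: ('v,'k::{zero_neq_one}) free) = {l}"
  by (auto simp: fsupp_def gen_def)

lemma fin_gen[simp]: "fin (gen l :: ('v,'k::{zero_neq_one}) free)"
  by (simp add: fsupp_gen)

lemma fin_add[simp]: "fin f \<Longrightarrow> fin g \<Longrightarrow> fin (f + g :: ('v,'k::ab_group_add) free)"
  by (rule finite_subset[of _ "fsupp f \<union> fsupp g"]) (auto simp: fsupp_def)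

lemma fin_diff[simp]: "fin f \<Longrightarrow> fin g \<Longrightarrow> fin (f - g :: ('v,'k::ab_group_add) free)"
  by (rule finite_subset[of _ "fsupp f \<union> fsupp g"]) (auto simp: fsupp_def)

lemma fin_uminus[simp]: "fin f \<Longrightarrow> fin (- f :: ('v,'k::ab_group_add) free)"
  by (rule finite_subset[of _ "fsupp f"]) (auto simp: fsupp_def)

lemma fin_scale[simp]: "fin f \<Longrightarrow> fin (fscale c f :: ('v,'k::field) free)"
  by (rule finite_subset[of _ "fsupp f"]) (auto simp: fsupp_def fscale_def)

lemma fin_zero[simp]: "fin (0 :: ('v,'k::zero) free)"
  by (simp add: fsupp_def)

lemma lin_ext_on:
  assumes "finite A" "fsupp f \<subseteq> A"
  shows "lin_ext F f = (\<lambda>m. \<Sum>l\<in>A. f l * F l m)"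
proof
  fix m
  show "lin_ext F f m = (\<Sum>l\<in>A. f l * F l m)"
    unfolding lin_ext_def
    by (rule sum.mono_neutral_left) (use assms in \<open>auto simp: fsupp_def\<close>)
qed

lemma lin_ext_add[simp]:
  assumes "fin f" "fin g"
  shows "lin_ext F (f + g) = lin_ext F f + lin_ext F g"
proof -
  let ?A = "fsupp f \<union> fsupp g"
  have "fsupp (f+g) \<subseteq> ?A" by (auto simp: fsupp_def)
  then show ?thesis using assms
    by (simp add: lin_ext_on[of ?A] fun_eq_iff sum.distrib distrib_right)
qed

lemma lin_ext_diff[simp]:
  assumes "fin f" "fin g"
  shows "lin_ext F (f - g) = lin_ext F f - lin_ext F g"
proof -
  let ?A = "fsupp f \<union> fsupp g"
  have "fsupp (f-g) \<subseteq> ?A" by (auto simp: fsupp_def)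
  then show ?thesis using assms
    by (simp add: lin_ext_on[of ?A] fun_eq_iff sum_subtractf left_diff_distrib)
qed

lemma lin_ext_scale[simp]:
  assumes "fin f"
  shows "lin_ext F (fscale c f) = fscale c (lin_ext F f)"
proof -
  have "fsupp (fscale c f) \<subseteq> fsupp f" by (auto simp: fsupp_def fscale_def)
  then show ?thesis using assms
    by (simp add: lin_ext_on[of "fsupp f"] fun_eq_iff fscale_def sum_distrib_left mult.assoc)
qed

lemma lin_ext_zero[simp]: "lin_ext F 0 = 0"
  by (simp add: lin_ext_def fsupp_def fun_eq_iff)

lemma lin_ext_gen[simp]: "lin_ext F (gen l :: ('v,'k::field) free) = F l"
  unfolding lin_ext_def fsupp_gen by (simp add: gen_def)

lemma null_add: "u \<in> tensor_null sc n \<Longrightarrow> v \<in> tensor_null sc n \<Longrightarrow> u + v \<in> tensor_null sc n"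
  unfolding tensor_null_def by (rule module.span_add[OF module_fscale])

lemma null_diff: "u \<in> tensor_null sc n \<Longrightarrow> v \<in> tensor_null sc n \<Longrightarrow> u - v \<in> tensor_null sc n"
  unfolding tensor_null_def by (rule module.span_diff[OF module_fscale])

lemma null_scale: "u \<in> tensor_null sc n \<Longrightarrow> fscale c u \<in> tensor_null sc n"
  unfolding tensor_null_def by (rule module.span_scale[OF module_fscale])

lemma null_zero: "0 \<in> tensor_null sc n"
  unfolding tensor_null_def by (rule module.span_zero[OF module_fscale])

lemma null_neg: "u \<in> tensor_null sc n \<Longrightarrow> - u \<in> tensor_null sc n"
  unfolding tensor_null_def by (rule module.span_neg[OF module_fscale])

lemma rel_add: "length p + length q + 1 = n \<Longrightarrow>
   gen (p @ [x + y] @ q) - gen (p @ [x] @ q) - gen (p @ [y] @ q) \<in> tensor_null sc n"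
  unfolding tensor_null_def tensor_rels_def
  by (rule module.span_base[OF module_fscale], rule UnI1) blast

lemma rel_scale: "length p + length q + 1 = n \<Longrightarrow>
   gen (p @ [sc c x] @ q) - fscale c (gen (p @ [x] @ q)) \<in> tensor_null sc n"
  unfolding tensor_null_def tensor_rels_def
  by (rule module.span_base[OF module_fscale], rule UnI2) blast

lemma rel_zero: "length p + length q + 1 = n \<Longrightarrow> gen (p @ [0] @ q) \<in> tensor_null sc n"
  using null_neg[OF rel_add[of p q n 0 0 sc]] by simp

lemma rels_fin: "u \<in> tensor_rels sc n \<Longrightarrow> fin u"
  by (auto simp: tensor_rels_def)

lemma endo_lemma:
  assumes "\<And>l. length l = n \<Longrightarrow> free_elt n (F l)"
    and "\<And>u. u \<in> tensor_rels sc n \<Longrightarrow> lin_ext F u \<in> tensor_null sc n"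
  shows "tensor_endo sc n F"
proof -
  have "module.span fscale (tensor_rels sc n) \<subseteq> {u. fin u \<and> lin_ext F u \<in> tensor_null sc n}"
  proof (rule module.span_minimal[OF module_fscale])
    show "tensor_rels sc n \<subseteq> {u. fin u \<and> lin_ext F u \<in> tensor_null sc n}"
      using assms(2) rels_fin by blast
    show "module.subspace fscale {u. fin u \<and> lin_ext F u \<in> tensor_null sc n}"
      by (rule module.subspaceI[OF module_fscale]) (auto intro: null_add null_scale null_zero)
  qed
  then show ?thesis using assms(1) unfolding tensor_endo_def tensor_null_def by blast
qed

lemma len2_cases: "length p + length q + 1 = 2 \<Longrightarrow> (\<exists>w. p = [] \<and> q = [w]) \<or> (\<exists>w. p = [w] \<and> q = [])"
  by (cases p; cases q) auto

lemma endo2I: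
  assumes "\<And>l. length l = 2 \<Longrightarrow> free_elt 2 (F l)"
    and "\<And>w x y. F [w, x + y] - F [w, x] - F [w, y] \<in> tensor_null sc 2"
    and "\<And>w x y. F [x + y, w] - F [x, w] - F [y, w] \<in> tensor_null sc 2"
    and "\<And>w c x. F [w, sc c x] - fscale c (F [w, x]) \<in> tensor_null sc 2"
    and "\<And>w c x. F [sc c x, w] - fscale c (F [x, w]) \<in> tensor_null sc 2"
  shows "tensor_endo sc 2 F"
proof (rule endo_lemma[OF assms(1)])
  fix u assume "u \<in> tensor_rels sc 2"
  then show "lin_ext F u \<in> tensor_null sc 2"
    unfolding tensor_rels_def
    by (auto simp: add_is_1 length_Suc_conv intro: assms(2-5))
qed

lemma lin_facts:
  assumes "Vector_Spaces.linear s1 s2 f"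
  shows "f (a + b) = f a + f b" "f (s1 c a) = s2 c (f a)" "f 0 = 0"
  using assms unfolding linear_iff_module_hom
  by (auto intro: module_hom.add module_hom.scale module_hom.zero)

lemma fscale_add[simp]: "fscale c (f + g) = fscale c f + fscale c (g :: ('v,'k::field) free)"
  by (simp add: fscale_def fun_eq_iff algebra_simps)

lemma fscale_diff[simp]: "fscale c (f - g) = fscale c f - fscale c (g :: ('v,'k::field) free)"
  by (simp add: fscale_def fun_eq_iff algebra_simps)

lemma free_elt_gen2:
  assumes "length a = n" "length b = n"
  shows "free_elt n (gen a + gen b :: ('v,'k::field) free)"
    "free_elt n (gen a - gen b :: ('v,'k::field) free)"
proof -
  have "fsupp (gen a + gen b :: ('v,'k) free) \<subseteq> {a, b}" "fsupp (gen a - gen b :: ('v,'k) free) \<subseteq> {a, b}"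
    by (auto simp: fsupp_def gen_def)
  then show "free_elt n (gen a + gen b :: ('v,'k::field) free)"
    "free_elt n (gen a - gen b :: ('v,'k::field) free)"
    using assms unfolding free_elt_def by (auto intro: finite_subset)
qed

lemma z3:
  "gen [a, 0, b] \<in> tensor_null sc 3" "gen [a, b, 0] \<in> tensor_null sc 3" "gen [0, a, b] \<in> tensor_null sc 3"
  using rel_zero[of "[a]" "[b]" 3 sc] rel_zero[of "[a,b]" "[]" 3 sc] rel_zero[of "[]" "[a,b]" 3 sc] by simp_all

lemma z2:
  "gen [a, 0] \<in> tensor_null sc 2" "gen [0, a] \<in> tensor_null sc 2"
  using rel_zero[of "[a]" "[]" 2 sc] rel_zero[of "[]" "[a]" 2 sc] by simp_all

lemma R_Lei2[simp]: "R_Lei \<omega> br [a, b] = gen [b, a] + gen [(1, 0), ce_bracket \<omega> br a b]"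
  by (simp add: R_Lei_def)

lemma op12_R[simp]: "op12 (R_Lei \<omega> br) [a, b, c] =
   gen [b, a, c] + gen [(1, 0), ce_bracket \<omega> br a b, c]"
proof
  fix m :: "('a \<times> 'b) list"
  show "op12 (R_Lei \<omega> br) [a, b, c] m = (gen [b, a, c] + gen [(1, 0), ce_bracket \<omega> br a b, c]) m"
  proof (cases "length m = 3")
    case True
    then obtain m0 m1 m2 where "m = [m0, m1, m2]"
      by (auto simp: numeral_eq_Suc length_Suc_conv)
    then show ?thesis by (simp add: op12_def gen_def)
  next
    case False
    then show ?thesis by (auto simp: op12_def gen_def)
  qed
qed

lemma op23_R[simp]: "op23 (R_Lei \<omega> br) [a, b, c] =
   gen [a, c, b] + gen [a, (1, 0), ce_bracket \<omega> br b c]"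
proof
  fix m :: "('a \<times> 'b) list"
  show "op23 (R_Lei \<omega> br) [a, b, c] m = (gen [a, c, b] + gen [a, (1, 0), ce_bracket \<omega> br b c]) m"
  proof (cases "length m = 3")
    case True
    then obtain m0 m1 m2 where "m = [m0, m1, m2]"
      by (auto simp: numeral_eq_Suc length_Suc_conv)
    then show ?thesis by (simp add: op23_def gen_def)
  next
    case False
    then show ?thesis by (auto simp: op23_def gen_def)
  qed
qed

lemma part1:
  fixes sc :: "'k::field \<Rightarrow> 'e::ab_group_add \<Rightarrow> 'e"
    and br :: "'e \<Rightarrow> 'e \<Rightarrow> 'e"
  assumes C: "leibniz_algebra (ce_scale sc) (ce_bracket \<omega> br)"
  shows "YBE_solution (ce_scale sc) (R_Lei \<omega> br)"
proof -
  let ?B = "ce_bracket \<omega> br"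
  let ?S = "ce_scale sc"
  let ?e = "(1::'k, 0::'e)"
  have bil: "bilinear_map ?S ?S ?S ?B" and leib: "\<And>x y z. ?B (?B x y) z = ?B (?B x z) y + ?B x (?B y z)"
    using C unfolding leibniz_algebra_def by blast+
  have l2: "Vector_Spaces.linear ?S ?S (?B x)" for x using bil unfolding bilinear_map_def by blast
  have l1: "Vector_Spaces.linear ?S ?S (\<lambda>x. ?B x y)" for y using bil unfolding bilinear_map_def by blast
  have Badd1: "?B (x + y) w = ?B x w + ?B y w" for x y w using lin_facts(1)[OF l1] by simp
  have Badd2: "?B w (x + y) = ?B w x + ?B w y" for x y w using lin_facts(1)[OF l2] by simp
  have Bsc1: "?B (?S c x) w = ?S c (?B x w)" for c x w using lin_facts(2)[OF l1] by simp
  have Bsc2: "?B w (?S c x) = ?S c (?B w x)" for c x w using lin_facts(2)[OF l2] by simp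
  have B01[simp]: "?B 0 w = 0" for w using lin_facts(3)[OF l1] by simp
  have B02[simp]: "?B w 0 = 0" for w using lin_facts(3)[OF l2] by simp
  have Be1[simp]: "?B ?e w = 0" for w
    using B01[of w] by (simp add: ce_bracket_def)
  have Be2[simp]: "?B w ?e = 0" for w
    using B02[of w] by (simp add: ce_bracket_def)
  define Sinv :: "('k \<times> 'e) list \<Rightarrow> ('k \<times> 'e, 'k) free" where
    "Sinv l = (if length l = 2 then gen [l ! 1, l ! 0] - gen [?B (l ! 1) (l ! 0), ?e] else 0)" for l
  have Sinv2[simp]: "Sinv [a, b] = gen [b, a] - gen [?B b a, ?e]" for a b by (simp add: Sinv_def)
  have endoR: "tensor_endo ?S 2 (R_Lei \<omega> br)"
  proof (rule endo2I)
    fix l :: "('k \<times> 'e) list" assume "length l = 2"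
    then show "free_elt 2 (R_Lei \<omega> br l)" unfolding R_Lei_def by (auto intro: free_elt_gen2)
  next
    fix w x y
    have "R_Lei \<omega> br [w, x + y] - R_Lei \<omega> br [w, x] - R_Lei \<omega> br [w, y] =
      (gen ([] @ [x + y] @ [w]) - gen ([] @ [x] @ [w]) - gen ([] @ [y] @ [w])) +
      (gen ([?e] @ [?B w x + ?B w y] @ []) - gen ([?e] @ [?B w x] @ []) - gen ([?e] @ [?B w y] @ []))"
      by (simp add: Badd2 fun_eq_iff algebra_simps)
    then show "R_Lei \<omega> br [w, x + y] - R_Lei \<omega> br [w, x] - R_Lei \<omega> br [w, y] \<in> tensor_null ?S 2"
      by (simp only:) (intro null_add rel_add; simp)
  next
    fix w x y
    have "R_Lei \<omega> br [x + y, w] - R_Lei \<omega> br [x, w] - R_Lei \<omega> br [y, w] =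
      (gen ([w] @ [x + y] @ []) - gen ([w] @ [x] @ []) - gen ([w] @ [y] @ [])) +
      (gen ([?e] @ [?B x w + ?B y w] @ []) - gen ([?e] @ [?B x w] @ []) - gen ([?e] @ [?B y w] @ []))"
      by (simp add: Badd1 fun_eq_iff algebra_simps)
    then show "R_Lei \<omega> br [x + y, w] - R_Lei \<omega> br [x, w] - R_Lei \<omega> br [y, w] \<in> tensor_null ?S 2"
      by (simp only:) (intro null_add rel_add; simp)
  next
    fix w c x
    have "R_Lei \<omega> br [w, ?S c x] - fscale c (R_Lei \<omega> br [w, x]) =
      (gen ([] @ [?S c x] @ [w]) - fscale c (gen ([] @ [x] @ [w]))) +
      (gen ([?e] @ [?S c (?B w x)] @ []) - fscale c (gen ([?e] @ [?B w x] @ [])))"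
      by (simp add: Bsc2 fun_eq_iff algebra_simps)
    then show "R_Lei \<omega> br [w, ?S c x] - fscale c (R_Lei \<omega> br [w, x]) \<in> tensor_null ?S 2"
      by (simp only:) (intro null_add rel_scale; simp)
  next
    fix w c x
    have "R_Lei \<omega> br [?S c x, w] - fscale c (R_Lei \<omega> br [x, w]) =
      (gen ([w] @ [?S c x] @ []) - fscale c (gen ([w] @ [x] @ []))) +
      (gen ([?e] @ [?S c (?B x w)] @ []) - fscale c (gen ([?e] @ [?B x w] @ [])))"
      by (simp add: Bsc1 fun_eq_iff algebra_simps)
    then show "R_Lei \<omega> br [?S c x, w] - fscale c (R_Lei \<omega> br [x, w]) \<in> tensor_null ?S 2"
      by (simp only:) (intro null_add rel_scale; simp)
  qed
  have endoS: "tensor_endo ?S 2 Sinv"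
  proof (rule endo2I)
    fix l :: "('k \<times> 'e) list" assume "length l = 2"
    then show "free_elt 2 (Sinv l)" unfolding Sinv_def by (auto intro: free_elt_gen2)
  next
    fix w x y
    have "Sinv [w, x + y] - Sinv [w, x] - Sinv [w, y] =
      (gen ([] @ [x + y] @ [w]) - gen ([] @ [x] @ [w]) - gen ([] @ [y] @ [w])) -
      (gen ([] @ [?B x w + ?B y w] @ [?e]) - gen ([] @ [?B x w] @ [?e]) - gen ([] @ [?B y w] @ [?e]))"
      by (simp add: Badd1 fun_eq_iff algebra_simps)
    then show "Sinv [w, x + y] - Sinv [w, x] - Sinv [w, y] \<in> tensor_null ?S 2"
      by (simp only:) (intro null_diff rel_add; simp)
  next
    fix w x y
    have "Sinv [x + y, w] - Sinv [x, w] - Sinv [y, w] =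
      (gen ([w] @ [x + y] @ []) - gen ([w] @ [x] @ []) - gen ([w] @ [y] @ [])) -
      (gen ([] @ [?B w x + ?B w y] @ [?e]) - gen ([] @ [?B w x] @ [?e]) - gen ([] @ [?B w y] @ [?e]))"
      by (simp add: Badd2 fun_eq_iff algebra_simps)
    then show "Sinv [x + y, w] - Sinv [x, w] - Sinv [y, w] \<in> tensor_null ?S 2"
      by (simp only:) (intro null_diff rel_add; simp)
  next
    fix w c x
    have "Sinv [w, ?S c x] - fscale c (Sinv [w, x]) =
      (gen ([] @ [?S c x] @ [w]) - fscale c (gen ([] @ [x] @ [w]))) -
      (gen ([] @ [?S c (?B x w)] @ [?e]) - fscale c (gen ([] @ [?B x w] @ [?e])))"
      by (simp add: Bsc1 fun_eq_iff algebra_simps)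
    then show "Sinv [w, ?S c x] - fscale c (Sinv [w, x]) \<in> tensor_null ?S 2"
      by (simp only:) (intro null_diff rel_scale; simp)
  next
    fix w c x
    have "Sinv [?S c x, w] - fscale c (Sinv [x, w]) =
      (gen ([w] @ [?S c x] @ []) - fscale c (gen ([w] @ [x] @ []))) -
      (gen ([] @ [?S c (?B w x)] @ [?e]) - fscale c (gen ([] @ [?B w x] @ [?e])))"
      by (simp add: Bsc2 fun_eq_iff algebra_simps)
    then show "Sinv [?S c x, w] - fscale c (Sinv [x, w]) \<in> tensor_null ?S 2"
      by (simp only:) (intro null_diff rel_scale; simp)
  qed
  have inv1: "tensor_eq ?S 2 (lin_ext Sinv (R_Lei \<omega> br [x, y])) (gen [x, y])" for x y
  proof -
    have "lin_ext Sinv (R_Lei \<omega> br [x, y]) - gen [x, y] = - gen [0, ?e]"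
      by (simp add: fun_eq_iff algebra_simps)
    then show ?thesis unfolding tensor_eq_def by (simp only:) (intro null_neg z2)
  qed
  have inv2: "tensor_eq ?S 2 (lin_ext (R_Lei \<omega> br) (Sinv [x, y])) (gen [x, y])" for x y
  proof -
    have "lin_ext (R_Lei \<omega> br) (Sinv [x, y]) - gen [x, y] = - gen [?e, 0]"
      by (simp add: fun_eq_iff algebra_simps)
    then show ?thesis unfolding tensor_eq_def by (simp only:) (intro null_neg z2)
  qed
  have ybe: "tensor_eq ?S 3
        (lin_ext (op12 (R_Lei \<omega> br)) (lin_ext (op23 (R_Lei \<omega> br)) (op12 (R_Lei \<omega> br) [x, y, z])))
        (lin_ext (op23 (R_Lei \<omega> br)) (lin_ext (op12 (R_Lei \<omega> br)) (op23 (R_Lei \<omega> br) [x, y, z])))" for x y z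
  proof -
    have "lin_ext (op12 (R_Lei \<omega> br)) (lin_ext (op23 (R_Lei \<omega> br)) (op12 (R_Lei \<omega> br) [x, y, z])) -
          lin_ext (op23 (R_Lei \<omega> br)) (lin_ext (op12 (R_Lei \<omega> br)) (op23 (R_Lei \<omega> br) [x, y, z])) =
       (gen [?e, ?e, ?B (?B x y) z] - gen [?e, ?e, ?B (?B x z) y]
         - gen [?e, ?e, ?B x (?B y z)])
       + gen [?e, 0, ?B x z] + gen [?e, 0, ?B x y] + gen [?e, 0, ?B (?B x y) z]
       - gen [?e, ?B y z, 0] - gen [?e, ?e, 0]"
      by (simp only: op12_R op23_R lin_ext_add lin_ext_gen fin_gen fin_add Be1 Be2 B01 B02)
        (simp add: fun_eq_iff algebra_simps)
    moreover have "gen [?e, ?e, ?B (?B x y) z] - gen [?e, ?e, ?B (?B x z) y]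
         - gen [?e, ?e, ?B x (?B y z)] \<in> tensor_null ?S 3"
      using rel_add[of "[?e, ?e]" "[]" 3 "?B (?B x z) y" "?B x (?B y z)" ?S] leib[of x y z] by simp
    ultimately show ?thesis unfolding tensor_eq_def
      by (simp only:) (assumption | rule null_diff null_add z3)+
  qed
  show ?thesis unfolding YBE_solution_def
    using endoR endoS inv1 inv2 ybe by blast
qed


lemma part2:
  assumes H: "leibniz_hom (ce_scale sc) (ce_bracket \<omega>1 br) (ce_scale sc) (ce_bracket \<omega>2 br) \<theta>"
    and T: "\<forall>a. \<theta> (a, 0) = (a, 0)"
  shows "tensor_eq (ce_scale sc) 2
                    (lin_ext (tensor_map2 \<theta>) (R_Lei \<omega>1 br [x, y]))
                    (lin_ext (R_Lei \<omega>2 br) (tensor_map2 \<theta> [x, y]))"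
proof -
  have h: "\<theta> (ce_bracket \<omega>1 br x y) = ce_bracket \<omega>2 br (\<theta> x) (\<theta> y)"
    using H unfolding leibniz_hom_def by blast
  have e: "\<theta> (1, 0) = (1, 0)" using T by blast
  have "lin_ext (tensor_map2 \<theta>) (R_Lei \<omega>1 br [x, y]) =
        lin_ext (R_Lei \<omega>2 br) (tensor_map2 \<theta> [x, y])"
    by (simp only: R_Lei2 lin_ext_add lin_ext_gen fin_gen tensor_map2_def list.map h e)
  then show ?thesis unfolding tensor_eq_def by (simp add: null_zero)
qed

theorem theorem5p1:
  fixes sc :: "'k::field \<Rightarrow> 'e::ab_group_add \<Rightarrow> 'e"
    and br :: "'e \<Rightarrow> 'e \<Rightarrow> 'e"
  assumes E: "leibniz_algebra sc br"
  shows "(\<forall>\<omega>. bilinear_map sc sc (*) \<omega> \<and> leibniz_algebra (ce_scale sc) (ce_bracket \<omega> br)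
            \<longrightarrow> YBE_solution (ce_scale sc) (R_Lei \<omega> br))
       \<and> (\<forall>\<omega>1 \<omega>2 \<theta>.
            bilinear_map sc sc (*) \<omega>1 \<and> leibniz_algebra (ce_scale sc) (ce_bracket \<omega>1 br) \<and>
            bilinear_map sc sc (*) \<omega>2 \<and> leibniz_algebra (ce_scale sc) (ce_bracket \<omega>2 br) \<and>
            leibniz_hom (ce_scale sc) (ce_bracket \<omega>1 br) (ce_scale sc) (ce_bracket \<omega>2 br) \<theta> \<and>
            (\<forall>a. \<theta> (a, 0) = (a, 0)) \<and> (\<forall>v. snd (\<theta> v) = snd v)
            \<longrightarrow> (\<forall>x y. tensor_eq (ce_scale sc) 2
                    (lin_ext (tensor_map2 \<theta>) (R_Lei \<omega>1 br [x, y]))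
                    (lin_ext (R_Lei \<omega>2 br) (tensor_map2 \<theta> [x, y]))))"
  using part1 part2 by blast

end
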